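(* There exist universal constants $a>0$ and $c_0>0$ such that the following holds. In the setting described in the context, let $\lambda\ge0$ and $\lambda_0\ge c_0\sigma^2\log(ep)/n$, and let $(\hat\alpha,\hat{\boldsymbol\beta})$ be a global minimiser of $\frac1n\|\boldsymbol y-\alpha\mathbf 1-\boldsymbol X\boldsymbol\beta\|_2^2+\lambda_0\|\boldsymbol\beta\|_0+\lambda\sum_{j=1}^q|\{\beta_k:k\in\mathcal I_j\}|$. For $t>0$ and integer $0\le s\le p$ define the event $$E_1(t,s)=\Big\{\frac4n\sup_{\boldsymbol\beta\in\mathbb R^p:\|\boldsymbol\beta\|_0=s}\Big(\boldsymbol\epsilon^\top\frac{\boldsymbol X(\hat{\boldsymbol\beta}-\boldsymbol\beta)}{\|\boldsymbol X(\hat{\boldsymbol\beta}-\boldsymbol\beta)\|_2}\Big)^2-\lambda_0\|\hat{\boldsymbol\beta}\|_0>\frac tn\Big\}.$$ Then for all $t>0$ and $0\le s\le p$, $\mathbb P(E_1(t,s))\le4\exp\big(-\frac{t}{a\sigma^2}+2s\log(3ep)\big)$.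
   Context: Setting: $q\ge1$ categorical predictors, the $j$-th taking values in $[p_j]$, and $N\ge0$ continuous predictors; $p=N+\sum_jp_j$. The deterministic design $\boldsymbol X\in\mathbb R^{n\times p}$ has $i$-th row $(\mathbf 1(C^{(i)}_1=1),\dots,\mathbf 1(C^{(i)}_1=p_1),\dots,\mathbf 1(C^{(i)}_q=p_q),W^{(i)}_1,\dots,W^{(i)}_N)$ where $C^{(i)}_j\in[p_j]$ are the categorical values and $W^{(i)}_l$ the continuous values of observation $i$; $\mathcal I_1=\{1,\dots,p_1\}$, $\mathcal I_2=\{p_1+1,\dots,p_1+p_2\}$, etc. $\boldsymbol y=\mathbf f^*+\boldsymbol\epsilon$ with deterministic $\mathbf f^*\in\mathbb R^n$ and $\boldsymbol\epsilon\sim\mathcal N(\mathbf 0,\sigma^2\boldsymbol I_n)$. Expressions of the form $0/0$ are treated as $0$. Universal constants do not depend on $n,p,q,N,\sigma,\mathbf f^*,\boldsymbol X,\lambda,\lambda_0,t,s$. *)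

theory Defs
  imports "HOL-Probability.Probability"
begin

text \<open>Conventions: observations are indexed by i < n, columns by k < p (0-based),
categorical predictors by j < q (0-based); categorical values are in {1..pj j}.
Vectors are functions nat => real; only the relevant indices matter.\<close>

definition cat_offset :: "(nat \<Rightarrow> nat) \<Rightarrow> nat \<Rightarrow> nat" where
  "cat_offset pj j = (\<Sum>j'<j. pj j')"

definition cat_block :: "(nat \<Rightarrow> nat) \<Rightarrow> nat \<Rightarrow> nat set" where
  "cat_block pj j = {cat_offset pj j ..< cat_offset pj (Suc j)}"

definition num_cols :: "nat \<Rightarrow> (nat \<Rightarrow> nat) \<Rightarrow> nat \<Rightarrow> nat" where
  "num_cols q pj N = N + (\<Sum>j<q. pj j)"

text \<open>Design matrix entry X i k: one-hot encodings of the categorical values C i j,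
followed by the continuous values W i l.\<close>
definition design :: "nat \<Rightarrow> (nat \<Rightarrow> nat) \<Rightarrow> (nat \<Rightarrow> nat \<Rightarrow> nat) \<Rightarrow> (nat \<Rightarrow> nat \<Rightarrow> real)
    \<Rightarrow> nat \<Rightarrow> nat \<Rightarrow> real" where
  "design q pj C W i k =
     (if k < cat_offset pj q
      then (if (\<exists>j<q. k = cat_offset pj j + (C i j - 1)) then 1 else 0)
      else W i (k - cat_offset pj q))"

definition l0norm :: "nat \<Rightarrow> (nat \<Rightarrow> real) \<Rightarrow> nat" where
  "l0norm p \<beta> = card {k. k < p \<and> \<beta> k \<noteq> 0}"

definition matvec :: "nat \<Rightarrow> (nat \<Rightarrow> nat \<Rightarrow> real) \<Rightarrow> (nat \<Rightarrow> real) \<Rightarrow> nat \<Rightarrow> real" where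
  "matvec p X \<beta> i = (\<Sum>k<p. X i k * \<beta> k)"

definition inner_n :: "nat \<Rightarrow> (nat \<Rightarrow> real) \<Rightarrow> (nat \<Rightarrow> real) \<Rightarrow> real" where
  "inner_n n u v = (\<Sum>i<n. u i * v i)"

definition norm_n :: "nat \<Rightarrow> (nat \<Rightarrow> real) \<Rightarrow> real" where
  "norm_n n v = sqrt (\<Sum>i<n. (v i)\<^sup>2)"

definition objective :: "nat \<Rightarrow> nat \<Rightarrow> nat \<Rightarrow> (nat \<Rightarrow> nat) \<Rightarrow> (nat \<Rightarrow> nat \<Rightarrow> real)
    \<Rightarrow> (nat \<Rightarrow> real) \<Rightarrow> real \<Rightarrow> real \<Rightarrow> real \<Rightarrow> (nat \<Rightarrow> real) \<Rightarrow> real" where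
  "objective n p q pj X y lam0 lam \<alpha> \<beta> =
     (1 / real n) * (\<Sum>i<n. (y i - \<alpha> - matvec p X \<beta> i)\<^sup>2)
     + lam0 * real (l0norm p \<beta>)
     + lam * (\<Sum>j<q. real (card (\<beta> ` cat_block pj j)))"

definition is_global_minimiser ::
  "nat \<Rightarrow> nat \<Rightarrow> nat \<Rightarrow> (nat \<Rightarrow> nat) \<Rightarrow> (nat \<Rightarrow> nat \<Rightarrow> real)
    \<Rightarrow> (nat \<Rightarrow> real) \<Rightarrow> real \<Rightarrow> real \<Rightarrow> real \<times> (nat \<Rightarrow> real) \<Rightarrow> bool" where
  "is_global_minimiser n p q pj X y lam0 lam m \<longleftrightarrow>
     (\<forall>\<alpha> \<beta>. objective n p q pj X y lam0 lam (fst m) (snd m) \<le> objective n p q pj X y lam0 lam \<alpha> \<beta>)"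

definition gauss_noise :: "nat \<Rightarrow> real \<Rightarrow> (nat \<Rightarrow> real) measure" where
  "gauss_noise n \<sigma> = PiM {..<n} (\<lambda>_. density lborel (normal_density 0 \<sigma>))"

text \<open>The event E_1(t,s) (as a set of noise realisations), for a selection betahat of
global minimisers (betahat eps = (alphahat, betahat) computed from y = f* + eps).
Division by zero yields 0 in Isabelle, matching the convention 0/0 = 0.\<close>
definition event_E1 :: "nat \<Rightarrow> nat \<Rightarrow> (nat \<Rightarrow> nat \<Rightarrow> real) \<Rightarrow> real \<Rightarrow> real
    \<Rightarrow> ((nat \<Rightarrow> real) \<Rightarrow> real \<times> (nat \<Rightarrow> real)) \<Rightarrow> real \<Rightarrow> nat \<Rightarrow> (nat \<Rightarrow> real) set" where
  "event_E1 n p X \<sigma> lam0 est t s =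
     {\<epsilon> \<in> space (gauss_noise n \<sigma>).
        4 / real n * (SUP \<beta>\<in>{\<beta>::nat \<Rightarrow> real. l0norm p \<beta> = s}.
            (inner_n n \<epsilon> (matvec p X (\<lambda>k. snd (est \<epsilon>) k - \<beta> k))
              / norm_n n (matvec p X (\<lambda>k. snd (est \<epsilon>) k - \<beta> k)))\<^sup>2)
        - lam0 * real (l0norm p (snd (est \<epsilon>))) > t / real n}"

end

theory Submission
  imports Defs
begin


lemma nd_shift:
  fixes \<sigma> c x :: real assumes "\<sigma> > 0"
  shows "normal_density 0 \<sigma> x * exp (c * x) = exp (c\<^sup>2 * \<sigma>\<^sup>2 / 2) * normal_density (c * \<sigma>\<^sup>2) \<sigma> x"
proof -
  have "-(x - 0)\<^sup>2 / (2 * \<sigma>\<^sup>2) + c * x = c\<^sup>2 * \<sigma>\<^sup>2 / 2 + (-(x - c * \<sigma>\<^sup>2)\<^sup>2 / (2 * \<sigma>\<^sup>2))"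
    using assms by (simp add: field_simps power2_eq_square)
  then have h: "exp (-(x - 0)\<^sup>2 / (2 * \<sigma>\<^sup>2)) * exp (c * x) = exp (c\<^sup>2 * \<sigma>\<^sup>2 / 2) * exp (-(x - c * \<sigma>\<^sup>2)\<^sup>2 / (2 * \<sigma>\<^sup>2))"
    by (simp only: exp_add[symmetric])
  have "normal_density 0 \<sigma> x * exp (c * x) = 1 / sqrt (2 * pi * \<sigma>\<^sup>2) * (exp (-(x - 0)\<^sup>2 / (2 * \<sigma>\<^sup>2)) * exp (c * x))"
    unfolding normal_density_def by (simp only: mult.assoc)
  also have "\<dots> = exp (c\<^sup>2 * \<sigma>\<^sup>2 / 2) * (1 / sqrt (2 * pi * \<sigma>\<^sup>2) * exp (-(x - c * \<sigma>\<^sup>2)\<^sup>2 / (2 * \<sigma>\<^sup>2)))"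
    unfolding h by (simp only: mult.left_commute)
  finally show ?thesis unfolding normal_density_def .
qed

lemma nn_integral_nd:
  fixes \<sigma> \<mu> :: real assumes "\<sigma> > 0"
  shows "(\<integral>\<^sup>+ x. ennreal (normal_density \<mu> \<sigma> x) \<partial>lborel) = 1"
  by (subst nn_integral_eq_integral) (auto simp: normal_density_nonneg assms)

lemma mgf_1d:
  fixes \<sigma> c :: real assumes "\<sigma> > 0"
  shows "(\<integral>\<^sup>+ x. ennreal (exp (c * x)) \<partial>density lborel (normal_density 0 \<sigma>)) = ennreal (exp (c\<^sup>2 * \<sigma>\<^sup>2 / 2))"
proof -
  have "(\<integral>\<^sup>+ x. ennreal (exp (c * x)) \<partial>density lborel (normal_density 0 \<sigma>))
     = (\<integral>\<^sup>+ x. ennreal (normal_density 0 \<sigma> x) * ennreal (exp (c * x)) \<partial>lborel)"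
    by (subst nn_integral_density) auto
  also have "\<dots> = (\<integral>\<^sup>+ x. ennreal (exp (c\<^sup>2 * \<sigma>\<^sup>2 / 2)) * ennreal (normal_density (c * \<sigma>\<^sup>2) \<sigma> x) \<partial>lborel)"
    using assms by (simp add: ennreal_mult'[symmetric] nd_shift)
  also have "\<dots> = ennreal (exp (c\<^sup>2 * \<sigma>\<^sup>2 / 2))"
    by (subst nn_integral_cmult) (auto simp: nn_integral_nd assms)
  finally show ?thesis .
qed

lemma sq_1d:
  "(\<integral>\<^sup>+ x. ennreal (exp (x\<^sup>2 / 4)) \<partial>density lborel (normal_density 0 1)) = ennreal (sqrt 2)"
proof -
  have eq: "normal_density 0 1 x * exp (x\<^sup>2 / 4) = sqrt 2 * normal_density 0 (sqrt 2) x" for x :: real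
  proof -
    have h1: "exp (-(x - 0)\<^sup>2 / (2 * 1\<^sup>2)) * exp (x\<^sup>2 / 4) = exp (-(x - 0)\<^sup>2 / (2 * (sqrt 2)\<^sup>2))"
      by (simp add: exp_add[symmetric])
    have h2: "1 / sqrt (2 * pi * 1\<^sup>2) = sqrt 2 * (1 / sqrt (2 * pi * (sqrt 2)\<^sup>2))"
      by (simp add: real_sqrt_mult field_simps)
    have "normal_density 0 1 x * exp (x\<^sup>2 / 4) = 1 / sqrt (2 * pi * 1\<^sup>2) * (exp (-(x - 0)\<^sup>2 / (2 * 1\<^sup>2)) * exp (x\<^sup>2 / 4))"
      unfolding normal_density_def by (simp only: mult.assoc)
    also have "\<dots> = sqrt 2 * (1 / sqrt (2 * pi * (sqrt 2)\<^sup>2) * exp (-(x - 0)\<^sup>2 / (2 * (sqrt 2)\<^sup>2)))"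
      unfolding h1 h2 by (simp only: mult.assoc)
    finally show ?thesis unfolding normal_density_def .
  qed
  have "(\<integral>\<^sup>+ x. ennreal (exp (x\<^sup>2 / 4)) \<partial>density lborel (normal_density 0 1))
     = (\<integral>\<^sup>+ x. ennreal (normal_density 0 1 x) * ennreal (exp (x\<^sup>2 / 4)) \<partial>lborel)"
    by (subst nn_integral_density) auto
  also have "\<dots> = (\<integral>\<^sup>+ x. ennreal (sqrt 2) * ennreal (normal_density 0 (sqrt 2) x) \<partial>lborel)"
    by (simp add: ennreal_mult'[symmetric] eq)
  also have "\<dots> = ennreal (sqrt 2)"
    by (subst nn_integral_cmult) (auto simp: nn_integral_nd)
  finally show ?thesis .
qed

lemma pps: "\<sigma> > 0 \<Longrightarrow> product_prob_space (\<lambda>_::nat. density lborel (normal_density 0 \<sigma>))"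
  by (simp add: product_prob_space_def product_prob_space_axioms_def product_sigma_finite_def
      prob_space_normal_density prob_space_imp_sigma_finite)

lemma mgf_lin:
  fixes \<sigma> :: real and I :: "nat set" and v :: "nat \<Rightarrow> real"
  assumes "\<sigma> > 0" "finite I"
  shows "(\<integral>\<^sup>+ x. ennreal (exp (\<Sum>i\<in>I. v i * x i)) \<partial>PiM I (\<lambda>_. density lborel (normal_density 0 \<sigma>)))
     = ennreal (exp (\<sigma>\<^sup>2 * (\<Sum>i\<in>I. (v i)\<^sup>2) / 2))"
proof -
  interpret P: product_prob_space "\<lambda>_::nat. density lborel (normal_density 0 \<sigma>)" using pps assms by auto
  have "(\<integral>\<^sup>+ x. ennreal (exp (\<Sum>i\<in>I. v i * x i)) \<partial>PiM I (\<lambda>_. density lborel (normal_density 0 \<sigma>)))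
     = (\<integral>\<^sup>+ x. (\<Prod>i\<in>I. (\<lambda>i y. ennreal (exp (v i * y))) i (x i)) \<partial>PiM I (\<lambda>_. density lborel (normal_density 0 \<sigma>)))"
    using assms by (simp add: exp_sum prod_ennreal)
  also have "\<dots> = (\<Prod>i\<in>I. \<integral>\<^sup>+ y. ennreal (exp (v i * y)) \<partial>density lborel (normal_density 0 \<sigma>))"
    by (subst P.product_nn_integral_prod) (auto simp: assms)
  also have "\<dots> = (\<Prod>i\<in>I. ennreal (exp ((v i)\<^sup>2 * \<sigma>\<^sup>2 / 2)))"
    using assms by (simp add: mgf_1d)
  also have "\<dots> = ennreal (exp (\<sigma>\<^sup>2 * (\<Sum>i\<in>I. (v i)\<^sup>2) / 2))"
    using assms by (simp add: prod_ennreal exp_sum[symmetric] sum_divide_distrib sum_distrib_left mult.commute)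
  finally show ?thesis .
qed

lemma chi_mgf:
  "(\<integral>\<^sup>+ x. ennreal (exp (\<Sum>i<d. (x i)\<^sup>2 / 4)) \<partial>PiM {..<d} (\<lambda>_. density lborel (normal_density 0 1)))
     = ennreal (sqrt 2 ^ d)"
proof -
  interpret P: product_prob_space "\<lambda>_::nat. density lborel (normal_density 0 1)" using pps by auto
  have "(\<integral>\<^sup>+ x. ennreal (exp (\<Sum>i<d. (x i)\<^sup>2 / 4)) \<partial>PiM {..<d} (\<lambda>_. density lborel (normal_density 0 1)))
     = (\<integral>\<^sup>+ x. (\<Prod>i\<in>{..<d}. (\<lambda>i y. ennreal (exp (y\<^sup>2 / 4))) i (x i)) \<partial>PiM {..<d} (\<lambda>_. density lborel (normal_density 0 1)))"
    by (simp add: exp_sum prod_ennreal)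
  also have "\<dots> = (\<Prod>i\<in>{..<d}. \<integral>\<^sup>+ y. ennreal (exp (y\<^sup>2 / 4)) \<partial>density lborel (normal_density 0 1))"
    by (subst P.product_nn_integral_prod) auto
  also have "\<dots> = ennreal (sqrt 2 ^ d)"
    by (simp add: sq_1d prod_ennreal) (subst ennreal_power, auto)
  finally show ?thesis .
qed



definition orthonormal :: "nat \<Rightarrow> (nat \<Rightarrow> real) list \<Rightarrow> bool" where
  "orthonormal n es \<longleftrightarrow> (\<forall>j<length es. \<forall>l<length es. inner_n n (es!j) (es!l) = (if j = l then 1 else 0))"

definition incomb :: "nat \<Rightarrow> (nat \<Rightarrow> real) list \<Rightarrow> (nat \<Rightarrow> real) \<Rightarrow> bool" where
  "incomb n es v \<longleftrightarrow> (\<exists>c. \<forall>i<n. v i = (\<Sum>j<length es. c j * (es!j) i))"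

lemma inner_n_comm: "inner_n n u v = inner_n n v u"
  by (simp add: inner_n_def mult.commute)

lemma ortho_sumsq:
  assumes "orthonormal n es"
  shows "(\<Sum>i<n. (\<Sum>j<length es. c j * (es!j) i)\<^sup>2) = (\<Sum>j<length es. (c j)\<^sup>2)"
proof -
  define d where "d = length es"
  have "(\<Sum>i<n. (\<Sum>j<d. c j * (es!j) i)\<^sup>2) = (\<Sum>i<n. \<Sum>j<d. \<Sum>l<d. c j * c l * ((es!j) i * (es!l) i))"
    by (rule sum.cong[OF refl]) (simp add: power2_eq_square sum_product mult_ac)
  also have "\<dots> = (\<Sum>j<d. \<Sum>i<n. \<Sum>l<d. c j * c l * ((es!j) i * (es!l) i))"
    by (rule sum.swap)
  also have "\<dots> = (\<Sum>j<d. \<Sum>l<d. \<Sum>i<n. c j * c l * ((es!j) i * (es!l) i))"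
    by (rule sum.cong[OF refl], rule sum.swap)
  also have "\<dots> = (\<Sum>j<d. \<Sum>l<d. c j * c l * inner_n n (es!j) (es!l))"
    by (simp add: inner_n_def sum_distrib_left)
  also have "\<dots> = (\<Sum>j<d. \<Sum>l<d. (if l = j then (c j)\<^sup>2 else 0))"
    using assms unfolding orthonormal_def d_def
    by (intro sum.cong refl) (auto simp: power2_eq_square)
  also have "\<dots> = (\<Sum>j<d. (c j)\<^sup>2)"
    by simp
  finally show ?thesis unfolding d_def .
qed

lemma proj_bound:
  assumes "orthonormal n es" "incomb n es u"
  shows "(inner_n n \<epsilon> u / norm_n n u)\<^sup>2 \<le> (\<Sum>j<length es. (inner_n n \<epsilon> (es!j))\<^sup>2)"
proof -
  define d where "d = length es"
  obtain c where u: "\<forall>i<n. u i = (\<Sum>j<d. c j * (es!j) i)"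
    using assms(2) unfolding incomb_def d_def by blast
  have nu: "(\<Sum>i<n. (u i)\<^sup>2) = (\<Sum>j<d. (c j)\<^sup>2)"
  proof -
    have "(\<Sum>i<n. (u i)\<^sup>2) = (\<Sum>i<n. (\<Sum>j<d. c j * (es!j) i)\<^sup>2)"
      using u by (intro sum.cong) auto
    then show ?thesis using ortho_sumsq[OF assms(1)] unfolding d_def by simp
  qed
  have iu: "inner_n n \<epsilon> u = (\<Sum>j<d. c j * inner_n n \<epsilon> (es!j))"
  proof -
    have "inner_n n \<epsilon> u = (\<Sum>i<n. \<Sum>j<d. c j * (\<epsilon> i * (es!j) i))"
      unfolding inner_n_def using u by (intro sum.cong) (auto simp: sum_distrib_left mult_ac)
    also have "\<dots> = (\<Sum>j<d. \<Sum>i<n. c j * (\<epsilon> i * (es!j) i))" by (rule sum.swap)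
    also have "\<dots> = (\<Sum>j<d. c j * inner_n n \<epsilon> (es!j))"
      by (simp add: inner_n_def sum_distrib_left)
    finally show ?thesis .
  qed
  have cs: "(inner_n n \<epsilon> u)\<^sup>2 \<le> (\<Sum>j<d. (c j)\<^sup>2) * (\<Sum>j<d. (inner_n n \<epsilon> (es!j))\<^sup>2)"
    unfolding iu by (rule Cauchy_Schwarz_ineq_sum)
  have lhs: "(inner_n n \<epsilon> u / norm_n n u)\<^sup>2 = (inner_n n \<epsilon> u)\<^sup>2 / (\<Sum>j<d. (c j)\<^sup>2)"
    unfolding norm_n_def power_divide nu
    by (subst real_sqrt_pow2) (auto intro: sum_nonneg)
  have z: "0 \<le> (\<Sum>j<d. (inner_n n \<epsilon> (es!j))\<^sup>2)" by (auto intro: sum_nonneg)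
  show ?thesis
  proof (cases "(\<Sum>j<d. (c j)\<^sup>2) = 0")
    case True then show ?thesis unfolding lhs d_def[symmetric] using z by simp
  next
    case False
    then have "(\<Sum>j<d. (c j)\<^sup>2) > 0" using sum_nonneg[of "{..<d}" "\<lambda>j. (c j)\<^sup>2"] by auto
    then show ?thesis unfolding lhs d_def[symmetric] using cs
      by (simp add: pos_divide_le_eq mult.commute)
  qed
qed

lemma sum_append_last:
  assumes "length es = m"
  shows "(\<Sum>j<Suc m. f j * ((es @ [e]) ! j) i) = (\<Sum>j<m. f j * (es!j) i) + f m * e i"
  using assms by (simp add: nth_append)

lemma gram_schmidt:
  "\<exists>es. orthonormal n es \<and> length es \<le> length vs \<and> (\<forall>v\<in>set vs. incomb n es v)"
proof (induction vs)
  case Nil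
  show ?case by (rule exI[of _ "[]"]) (simp add: orthonormal_def)
next
  case (Cons v vs)
  then obtain es where o: "orthonormal n es" and l: "length es \<le> length vs"
    and c: "\<forall>u\<in>set vs. incomb n es u" by blast
  define m where "m = length es"
  define w where "w = (\<lambda>i. v i - (\<Sum>j<m. inner_n n v (es!j) * (es!j) i))"
  have innw: "inner_n n (es!j) w = 0" if "j < m" for j
  proof -
    have "inner_n n (es!j) w = inner_n n (es!j) v - (\<Sum>i<n. \<Sum>l<m. inner_n n v (es!l) * ((es!j) i * (es!l) i))"
      unfolding inner_n_def w_def
      by (simp add: right_diff_distrib sum_subtractf sum_distrib_left mult_ac)
    also have "(\<Sum>i<n. \<Sum>l<m. inner_n n v (es!l) * ((es!j) i * (es!l) i)) = (\<Sum>l<m. \<Sum>i<n. inner_n n v (es!l) * ((es!j) i * (es!l) i))"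
      by (rule sum.swap)
    also have "\<dots> = (\<Sum>l<m. inner_n n v (es!l) * inner_n n (es!j) (es!l))"
      by (simp add: inner_n_def sum_distrib_left)
    also have "\<dots> = (\<Sum>l<m. if l = j then inner_n n v (es!j) else 0)"
      using o that unfolding orthonormal_def m_def by (intro sum.cong refl) auto
    also have "\<dots> = inner_n n v (es!j)" using that by simp
    finally show ?thesis by (simp add: inner_n_comm)
  qed
  show ?case
  proof (cases "(\<Sum>i<n. (w i)\<^sup>2) = 0")
    case True
    then have "\<forall>i\<in>{..<n}. (w i)\<^sup>2 = 0"
      by (subst sum_nonneg_eq_0_iff[symmetric]) auto
    then have w0: "\<forall>i<n. w i = 0" by simp
    have "incomb n es v"
      unfolding incomb_def
      by (rule exI[of _ "\<lambda>j. inner_n n v (es!j)"]) (use w0 in \<open>auto simp: w_def m_def\<close>)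
    then show ?thesis using o l c by (intro exI[of _ es]) auto
  next
    case False
    define nw where "nw = norm_n n w"
    have nwpos: "nw > 0" using False unfolding nw_def norm_n_def
      using sum_nonneg[of "{..<n}" "\<lambda>i. (w i)\<^sup>2"] by auto
    define e where "e = (\<lambda>i. w i / nw)"
    define es' where "es' = es @ [e]"
    have len: "length es' = Suc m" by (simp add: es'_def m_def)
    have nth': "es' ! j = (if j < m then es ! j else e)" if "j < Suc m" for j
      using that by (simp add: es'_def nth_append m_def)
    have ee: "inner_n n e e = 1"
    proof -
      have "inner_n n e e = (\<Sum>i<n. (w i)\<^sup>2) / nw\<^sup>2"
        by (simp add: inner_n_def e_def power2_eq_square sum_divide_distrib)
      also have "nw\<^sup>2 = (\<Sum>i<n. (w i)\<^sup>2)" unfolding nw_def norm_n_def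
        by (subst real_sqrt_pow2) (auto intro: sum_nonneg)
      finally show ?thesis using False by simp
    qed
    have je: "inner_n n (es!j) e = 0" if "j < m" for j
    proof -
      have "inner_n n (es!j) e = inner_n n (es!j) w / nw"
        by (simp add: inner_n_def e_def sum_divide_distrib)
      then show ?thesis using innw[OF that] by simp
    qed
    have o': "orthonormal n es'"
      unfolding orthonormal_def len
    proof (intro allI impI)
      fix j l assume j: "j < Suc m" and l: "l < Suc m"
      show "inner_n n (es' ! j) (es' ! l) = (if j = l then 1 else 0)"
      proof (cases "j < m")
        case True
        show ?thesis
        proof (cases "l < m")
          case True
          then show ?thesis using \<open>j < m\<close> o nth'[OF j] nth'[OF l] unfolding orthonormal_def m_def by auto
        next
          case False
          then show ?thesis using \<open>j < m\<close> nth'[OF j] nth'[OF l] je by auto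
        qed
      next
        case False
        show ?thesis
        proof (cases "l < m")
          case True
          then show ?thesis using False nth'[OF j] nth'[OF l] je inner_n_comm by auto
        next
          case False
          then show ?thesis using \<open>\<not> j < m\<close> j l nth'[OF j] nth'[OF l] ee by auto
        qed
      qed
    qed
    have cv: "incomb n es' v"
      unfolding incomb_def len
    proof (rule exI[of _ "\<lambda>j. if j < m then inner_n n v (es!j) else nw"], intro allI impI)
      fix i assume "i < n"
      have s1: "(\<Sum>j<Suc m. (if j < m then inner_n n v (es!j) else nw) * (es'!j) i)
          = (\<Sum>j<m. (if j < m then inner_n n v (es!j) else nw) * (es!j) i) + (if m < m then inner_n n v (es!m) else nw) * e i"
        unfolding es'_def by (rule sum_append_last[OF m_def[symmetric]])
      have s2: "(\<Sum>j<m. (if j < m then inner_n n v (es!j) else nw) * (es!j) i) = (\<Sum>j<m. inner_n n v (es!j) * (es!j) i)"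
        by (rule sum.cong) auto
      have s3: "nw * e i = w i" using nwpos unfolding e_def by simp
      show "v i = (\<Sum>j<Suc m. (if j < m then inner_n n v (es!j) else nw) * (es'!j) i)"
        unfolding s1 s2 using s3 unfolding w_def by simp
    qed
    have cu: "incomb n es' u" if "u \<in> set vs" for u
    proof -
      have "incomb n es u" using c that by (rule bspec)
      then obtain cc where cc: "\<forall>i<n. u i = (\<Sum>j<m. cc j * (es!j) i)"
        unfolding incomb_def m_def by (elim exE) blast
      show ?thesis unfolding incomb_def len
      proof (rule exI[of _ "\<lambda>j. if j < m then cc j else 0"], intro allI impI)
        fix i assume "i < n"
        have s1: "(\<Sum>j<Suc m. (if j < m then cc j else 0) * (es'!j) i)
           = (\<Sum>j<m. (if j < m then cc j else 0) * (es!j) i) + (if m < m then cc m else 0) * e i"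
          unfolding es'_def by (rule sum_append_last[OF m_def[symmetric]])
        have s2: "(\<Sum>j<m. (if j < m then cc j else 0) * (es!j) i) = (\<Sum>j<m. cc j * (es!j) i)"
          by (rule sum.cong) auto
        show "u i = (\<Sum>j<Suc m. (if j < m then cc j else 0) * (es'!j) i)"
          unfolding s1 s2 using cc \<open>i < n\<close> by simp
      qed
    qed
    show ?thesis using o' len l cv cu unfolding m_def by (intro exI[of _ es']) auto
  qed
qed



lemma gauss_ps: "\<sigma> > 0 \<Longrightarrow> prob_space (gauss_noise n \<sigma>)"
  unfolding gauss_noise_def by (intro prob_space_PiM) (simp add: prob_space_normal_density)

lemma std_ps: "prob_space (PiM {..<d} (\<lambda>_::nat. density lborel (normal_density 0 (1::real))))"
  by (intro prob_space_PiM) (simp add: prob_space_normal_density)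

lemma meas_f:
  "(\<lambda>x. ennreal (exp (\<Sum>j<d. inner_n n (fst x) (es!j) / (\<sigma> * sqrt 2) * snd x j)))
     \<in> borel_measurable (gauss_noise n \<sigma> \<Otimes>\<^sub>M PiM {..<d} (\<lambda>_::nat. density lborel (normal_density 0 (1::real))))"
  unfolding gauss_noise_def inner_n_def by measurable

lemma chi_bound:
  assumes sp: "\<sigma> > 0" and o: "orthonormal n es"
  shows "(\<integral>\<^sup>+\<epsilon>. ennreal (exp ((\<Sum>j<length es. (inner_n n \<epsilon> (es!j))\<^sup>2) / (4 * \<sigma>\<^sup>2))) \<partial>gauss_noise n \<sigma>)
         = ennreal (sqrt 2 ^ length es)"
proof -
  define d where "d = length es"
  define G where "G = PiM {..<d} (\<lambda>_::nat. density lborel (normal_density 0 (1::real)))"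
  define E where "E = gauss_noise n \<sigma>"
  define f where "f = (\<lambda>\<epsilon> (g::nat \<Rightarrow> real). ennreal (exp (\<Sum>j<d. inner_n n \<epsilon> (es!j) / (\<sigma> * sqrt 2) * g j)))"
  interpret PP: pair_sigma_finite E G
    unfolding pair_sigma_finite_def E_def G_def
    using gauss_ps[OF sp] std_ps prob_space_imp_sigma_finite by blast
  have step1: "ennreal (exp ((\<Sum>j<d. (inner_n n \<epsilon> (es!j))\<^sup>2) / (4 * \<sigma>\<^sup>2))) = (\<integral>\<^sup>+g. f \<epsilon> g \<partial>G)" for \<epsilon>
  proof -
    have "(\<integral>\<^sup>+g. f \<epsilon> g \<partial>G) = ennreal (exp (1\<^sup>2 * (\<Sum>j<d. (inner_n n \<epsilon> (es!j) / (\<sigma> * sqrt 2))\<^sup>2) / 2))"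
      unfolding f_def G_def by (rule mgf_lin) auto
    also have "1\<^sup>2 * (\<Sum>j<d. (inner_n n \<epsilon> (es!j) / (\<sigma> * sqrt 2))\<^sup>2) / 2 = (\<Sum>j<d. (inner_n n \<epsilon> (es!j))\<^sup>2) / (4 * \<sigma>\<^sup>2)"
      by (simp add: power_divide power_mult_distrib sum_divide_distrib)
    finally show ?thesis by simp
  qed
  have step3: "(\<integral>\<^sup>+\<epsilon>. f \<epsilon> g \<partial>E) = ennreal (exp (\<Sum>j<d. (g j)\<^sup>2 / 4))" for g
  proof -
    define w where "w = (\<lambda>i. (\<Sum>j<d. g j * (es!j) i) / (\<sigma> * sqrt 2))"
    have ex: "(\<Sum>j<d. inner_n n \<epsilon> (es!j) / (\<sigma> * sqrt 2) * g j) = (\<Sum>i<n. w i * \<epsilon> i)" for \<epsilon>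
    proof -
      have "(\<Sum>j<d. inner_n n \<epsilon> (es!j) / (\<sigma> * sqrt 2) * g j) = (\<Sum>j<d. \<Sum>i<n. g j * (es!j) i * \<epsilon> i / (\<sigma> * sqrt 2))"
        unfolding inner_n_def by (simp add: sum_divide_distrib sum_distrib_left sum_distrib_right mult_ac)
      also have "\<dots> = (\<Sum>i<n. \<Sum>j<d. g j * (es!j) i * \<epsilon> i / (\<sigma> * sqrt 2))" by (rule sum.swap)
      also have "\<dots> = (\<Sum>i<n. w i * \<epsilon> i)"
        unfolding w_def by (simp add: sum_divide_distrib sum_distrib_left sum_distrib_right mult_ac)
      finally show ?thesis .
    qed
    have "(\<integral>\<^sup>+\<epsilon>. f \<epsilon> g \<partial>E) = (\<integral>\<^sup>+\<epsilon>. ennreal (exp (\<Sum>i\<in>{..<n}. w i * \<epsilon> i)) \<partial>E)"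
      unfolding f_def ex by simp
    also have "\<dots> = ennreal (exp (\<sigma>\<^sup>2 * (\<Sum>i\<in>{..<n}. (w i)\<^sup>2) / 2))"
      unfolding E_def gauss_noise_def by (rule mgf_lin) (auto simp: sp)
    also have "(\<Sum>i\<in>{..<n}. (w i)\<^sup>2) = (\<Sum>i<n. (\<Sum>j<d. g j * (es!j) i)\<^sup>2) / (2 * \<sigma>\<^sup>2)"
    proof -
      have "(\<Sum>i\<in>{..<n}. (w i)\<^sup>2) = (\<Sum>i<n. (\<Sum>j<d. g j * (es!j) i)\<^sup>2 / (2 * \<sigma>\<^sup>2))"
        unfolding w_def by (intro sum.cong refl) (simp add: power_divide power_mult_distrib)
      then show ?thesis by (simp add: sum_divide_distrib)
    qed
    also have "(\<Sum>i<n. (\<Sum>j<d. g j * (es!j) i)\<^sup>2) = (\<Sum>j<d. (g j)\<^sup>2)"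
      unfolding d_def by (rule ortho_sumsq[OF o])
    also have "\<sigma>\<^sup>2 * ((\<Sum>j<d. (g j)\<^sup>2) / (2 * \<sigma>\<^sup>2)) / 2 = (\<Sum>j<d. (g j)\<^sup>2 / 4)"
      using sp by (simp add: sum_divide_distrib[symmetric] field_simps)
    finally show ?thesis .
  qed
  have meas: "case_prod f \<in> borel_measurable (E \<Otimes>\<^sub>M G)"
    unfolding f_def E_def G_def gauss_noise_def inner_n_def by measurable
  have "(\<integral>\<^sup>+\<epsilon>. ennreal (exp ((\<Sum>j<d. (inner_n n \<epsilon> (es!j))\<^sup>2) / (4 * \<sigma>\<^sup>2))) \<partial>E)
      = (\<integral>\<^sup>+\<epsilon>. (\<integral>\<^sup>+g. f \<epsilon> g \<partial>G) \<partial>E)"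
    by (simp add: step1)
  also have "\<dots> = (\<integral>\<^sup>+g. (\<integral>\<^sup>+\<epsilon>. f \<epsilon> g \<partial>E) \<partial>G)"
    using PP.Fubini'[OF meas] by simp
  also have "\<dots> = (\<integral>\<^sup>+g. ennreal (exp (\<Sum>j<d. (g j)\<^sup>2 / 4)) \<partial>G)"
    by (simp add: step3)
  also have "\<dots> = ennreal (sqrt 2 ^ d)"
    unfolding G_def by (rule chi_mgf)
  finally show ?thesis unfolding E_def d_def .
qed

lemma tail_bound:
  assumes sp: "\<sigma> > 0" and o: "orthonormal n es"
  shows "measure (gauss_noise n \<sigma>) {\<epsilon>\<in>space (gauss_noise n \<sigma>). x < 4 * (\<Sum>j<length es. (inner_n n \<epsilon> (es!j))\<^sup>2)}
     \<le> sqrt 2 ^ length es * exp (- x / (16 * \<sigma>\<^sup>2))"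
proof -
  define E where "E = gauss_noise n \<sigma>"
  interpret P: prob_space E using gauss_ps[OF sp] unfolding E_def .
  define Q where "Q = (\<lambda>\<epsilon>. (\<Sum>j<length es. (inner_n n \<epsilon> (es!j))\<^sup>2))"
  have mQ[measurable]: "Q \<in> borel_measurable E"
    unfolding Q_def E_def gauss_noise_def inner_n_def by measurable
  have sub: "{\<epsilon>\<in>space E. x < 4 * Q \<epsilon>} \<subseteq> {\<epsilon>\<in>space E. Q \<epsilon> \<ge> x / 4}" by auto
  have "emeasure E {\<epsilon>\<in>space E. x < 4 * Q \<epsilon>} \<le> emeasure E {\<epsilon>\<in>space E. Q \<epsilon> \<ge> x / 4}"
    by (rule emeasure_mono[OF sub]) measurable
  also have "\<dots> \<le> ennreal (exp (- (1 / (4 * \<sigma>\<^sup>2)) * (x / 4))) *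
       nn_integral E (\<lambda>\<epsilon>. ennreal (exp ((1 / (4 * \<sigma>\<^sup>2)) * Q \<epsilon>)) * indicator (space E) \<epsilon>)"
    by (rule Chernoff_ineq_nn_integral_ge) (use sp in auto)
  also have "nn_integral E (\<lambda>\<epsilon>. ennreal (exp ((1 / (4 * \<sigma>\<^sup>2)) * Q \<epsilon>)) * indicator (space E) \<epsilon>)
      = (\<integral>\<^sup>+\<epsilon>. ennreal (exp ((\<Sum>j<length es. (inner_n n \<epsilon> (es!j))\<^sup>2) / (4 * \<sigma>\<^sup>2))) \<partial>gauss_noise n \<sigma>)"
    unfolding E_def Q_def by (rule nn_integral_cong) (simp add: indicator_def)
  also have "\<dots> = ennreal (sqrt 2 ^ length es)" by (rule chi_bound[OF sp o])
  also have "ennreal (exp (- (1 / (4 * \<sigma>\<^sup>2)) * (x / 4))) * ennreal (sqrt 2 ^ length es)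
      = ennreal (sqrt 2 ^ length es * exp (- x / (16 * \<sigma>\<^sup>2)))"
    by (simp add: ennreal_mult'[symmetric] mult.commute)
  finally have "ennreal (measure E {\<epsilon>\<in>space E. x < 4 * Q \<epsilon>}) \<le> ennreal (sqrt 2 ^ length es * exp (- x / (16 * \<sigma>\<^sup>2)))"
    by (simp add: P.emeasure_eq_measure)
  then show ?thesis unfolding E_def Q_def by (subst (asm) ennreal_le_iff) auto
qed



lemma count_sum:
  assumes "finite A"
  shows "(\<Sum>S\<in>Pow A. (r::real) ^ card S) = (1 + r) ^ card A"
proof -
  have "(\<Prod>x\<in>A. r + 1) = (\<Sum>X\<in>Pow A. (\<Prod>x\<in>X. r) * (\<Prod>x\<in>A-X. 1))"
    by (rule prod_add[OF assms])
  then show ?thesis by (simp add: add.commute)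
qed

lemma pow_bound:
  assumes "p \<ge> (1::nat)" "0 \<le> r" "r * real p \<le> 1"
  shows "(1 + r) ^ p \<le> (3::real)"
proof -
  have "(1 + r) ^ p \<le> exp r ^ p"
    by (rule power_mono) (use assms exp_ge_add_one_self[of r] in auto)
  also have "\<dots> = exp (real p * r)" by (simp add: exp_of_nat_mult)
  also have "\<dots> \<le> exp 1" using assms by (simp add: mult.commute)
  also have "\<dots> \<le> 3" by (rule exp_le)
  finally show ?thesis .
qed

lemma incomb_lincomb:
  assumes "finite U" "\<forall>k\<in>U. incomb n es (v k)"
  shows "incomb n es (\<lambda>i. \<Sum>k\<in>U. a k * v k i)"
proof -
  from assms(2) have "\<forall>k\<in>U. \<exists>c. \<forall>i<n. v k i = (\<Sum>j<length es. c j * (es!j) i)"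
    unfolding incomb_def by blast
  then obtain cf where cf: "\<forall>k\<in>U. \<forall>i<n. v k i = (\<Sum>j<length es. cf k j * (es!j) i)"
    by metis
  show ?thesis unfolding incomb_def
  proof (rule exI[of _ "\<lambda>j. \<Sum>k\<in>U. a k * cf k j"], intro allI impI)
    fix i assume "i < n"
    have "(\<Sum>k\<in>U. a k * v k i) = (\<Sum>k\<in>U. \<Sum>j<length es. a k * cf k j * (es!j) i)"
      using cf \<open>i < n\<close> by (intro sum.cong refl) (simp add: sum_distrib_left mult.assoc)
    also have "\<dots> = (\<Sum>j<length es. \<Sum>k\<in>U. a k * cf k j * (es!j) i)" by (rule sum.swap)
    also have "\<dots> = (\<Sum>j<length es. (\<Sum>k\<in>U. a k * cf k j) * (es!j) i)"
      by (simp add: sum_distrib_right)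
    finally show "(\<Sum>k\<in>U. a k * v k i) = (\<Sum>j<length es. (\<Sum>k\<in>U. a k * cf k j) * (es!j) i)" .
  qed
qed

lemma basis_exists:
  fixes X :: "nat \<Rightarrow> nat \<Rightarrow> real"
  shows "\<exists>B. \<forall>U. finite U \<longrightarrow> orthonormal n (B U) \<and> length (B U) \<le> card U \<and> (\<forall>k\<in>U. incomb n (B U) (\<lambda>i. X i k))"
proof -
  have "\<forall>U. \<exists>es. finite U \<longrightarrow> orthonormal n es \<and> length es \<le> card U \<and> (\<forall>k\<in>U. incomb n es (\<lambda>i. X i k))"
  proof
    fix U :: "nat set"
    obtain es where es: "orthonormal n es" "length es \<le> length (map (\<lambda>k i. X i k) (sorted_list_of_set U))"
      "\<forall>v\<in>set (map (\<lambda>k i. X i k) (sorted_list_of_set U)). incomb n es v"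
      using gram_schmidt by blast
    show "\<exists>es. finite U \<longrightarrow> orthonormal n es \<and> length es \<le> card U \<and> (\<forall>k\<in>U. incomb n es (\<lambda>i. X i k))"
      by (rule exI[of _ es]) (use es in auto)
  qed
  then show ?thesis by metis
qed

lemma main_general:
  fixes X :: "nat \<Rightarrow> nat \<Rightarrow> real" and est :: "(nat \<Rightarrow> real) \<Rightarrow> real \<times> (nat \<Rightarrow> real)"
  assumes n: "n > 0" and p1: "p \<ge> 1" and sp: "\<sigma> > 0"
    and lam0: "lam0 \<ge> 32 * \<sigma>\<^sup>2 * ln (exp 1 * real p) / real n" and sle: "s \<le> p"
  shows "\<exists>A\<in>sets (gauss_noise n \<sigma>). event_E1 n p X \<sigma> lam0 est t s \<subseteq> A \<and>
     measure (gauss_noise n \<sigma>) A \<le> 4 * exp (- t / (16 * \<sigma>\<^sup>2) + 2 * real s * ln (3 * exp 1 * real p))"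
proof -
  define E where "E = gauss_noise n \<sigma>"
  interpret P: prob_space E using gauss_ps[OF sp] unfolding E_def .
  obtain B where B: "\<forall>U. finite U \<longrightarrow> orthonormal n (B U) \<and> length (B U) \<le> card U \<and> (\<forall>k\<in>U. incomb n (B U) (\<lambda>i. X i k))"
    using basis_exists by blast
  define Q where "Q U \<epsilon> = (\<Sum>j<length (B U). (inner_n n \<epsilon> (B U ! j))\<^sup>2)" for U \<epsilon>
  define Ts where "Ts = {T. T \<subseteq> {..<p} \<and> card T = s}"
  define F where "F S T = {\<epsilon>\<in>space E. t + real n * lam0 * real (card S) < 4 * Q (S \<union> T) \<epsilon>}" for S T
  define A where "A = (\<Union>S\<in>Pow {..<p}. \<Union>T\<in>Ts. F S T)"
  have finTs: "finite Ts" unfolding Ts_def by (rule finite_subset[of _ "Pow {..<p}"]) auto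
  have FS[measurable]: "F S T \<in> sets E" for S T
    unfolding F_def Q_def E_def gauss_noise_def inner_n_def by measurable
  have FU: "(\<Union>T\<in>Ts. F S T) \<in> sets E" for S
    using finTs FS by (intro sets.finite_UN) auto
  have Asets: "A \<in> sets E" unfolding A_def using FU finTs by (intro sets.finite_UN) auto
  have incl: "event_E1 n p X \<sigma> lam0 est t s \<subseteq> A"
  proof
    fix \<epsilon> assume ev: "\<epsilon> \<in> event_E1 n p X \<sigma> lam0 est t s"
    define bh where "bh = snd (est \<epsilon>)"
    define S where "S = {k. k < p \<and> bh k \<noteq> 0}"
    have l0S: "l0norm p bh = card S" unfolding l0norm_def S_def ..
    define Sup where "Sup = (SUP \<beta>\<in>{\<beta>::nat \<Rightarrow> real. l0norm p \<beta> = s}.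
        (inner_n n \<epsilon> (matvec p X (\<lambda>k. bh k - \<beta> k)) / norm_n n (matvec p X (\<lambda>k. bh k - \<beta> k)))\<^sup>2)"
    have "\<epsilon> \<in> space E \<and> 4 / real n * Sup - lam0 * real (l0norm p bh) > t / real n"
      using ev unfolding event_E1_def E_def Sup_def bh_def by simp
    then have evs: "\<epsilon> \<in> space E" and gt: "4 / real n * Sup - lam0 * real (card S) > t / real n"
      unfolding l0S by auto
    show "\<epsilon> \<in> A"
    proof (rule ccontr)
      assume nA: "\<epsilon> \<notin> A"
      have SP: "S \<in> Pow {..<p}" unfolding S_def by auto
      have bnd: "4 * Q (S \<union> T) \<epsilon> \<le> t + real n * lam0 * real (card S)" if "T \<in> Ts" for T
      proof -
        have "\<not> (t + real n * lam0 * real (card S) < 4 * Q (S \<union> T) \<epsilon>)"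
          using nA SP that evs unfolding A_def F_def by blast
        then show ?thesis by simp
      qed
      have ne: "{\<beta>::nat \<Rightarrow> real. l0norm p \<beta> = s} \<noteq> {}"
      proof -
        have "{k. k < p \<and> (if k < s then 1 else (0::real)) \<noteq> 0} = {..<s}" using sle by auto
        then have "l0norm p (\<lambda>k. if k < s then 1 else 0) = s" unfolding l0norm_def by simp
        then show ?thesis by blast
      qed
      have "Sup \<le> (t + real n * lam0 * real (card S)) / 4"
        unfolding Sup_def
      proof (rule cSUP_least[OF ne])
        fix \<beta> :: "nat \<Rightarrow> real" assume "\<beta> \<in> {\<beta>. l0norm p \<beta> = s}"
        then have lb: "l0norm p \<beta> = s" by simp
        define T where "T = {k. k < p \<and> \<beta> k \<noteq> 0}"
        have TT: "T \<in> Ts" unfolding Ts_def T_def using lb unfolding l0norm_def by auto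
        define U where "U = S \<union> T"
        have finU: "finite U" unfolding U_def S_def T_def by auto
        have Usub: "U \<subseteq> {..<p}" unfolding U_def S_def T_def by auto
        have BU: "orthonormal n (B U)" "\<forall>k\<in>U. incomb n (B U) (\<lambda>i. X i k)" using B finU by auto
        have mv: "matvec p X (\<lambda>k. bh k - \<beta> k) = (\<lambda>i. \<Sum>k\<in>U. (bh k - \<beta> k) * X i k)"
        proof
          fix i
          have "matvec p X (\<lambda>k. bh k - \<beta> k) i = (\<Sum>k<p. (bh k - \<beta> k) * X i k)"
            unfolding matvec_def by (simp add: mult.commute)
          also have "\<dots> = (\<Sum>k\<in>U. (bh k - \<beta> k) * X i k)"
            by (rule sum.mono_neutral_right) (use Usub in \<open>auto simp: U_def S_def T_def\<close>)
          finally show "matvec p X (\<lambda>k. bh k - \<beta> k) i = (\<Sum>k\<in>U. (bh k - \<beta> k) * X i k)" .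
        qed
        have inc: "incomb n (B U) (matvec p X (\<lambda>k. bh k - \<beta> k))"
          unfolding mv by (rule incomb_lincomb[OF finU BU(2)])
        have "(inner_n n \<epsilon> (matvec p X (\<lambda>k. bh k - \<beta> k)) / norm_n n (matvec p X (\<lambda>k. bh k - \<beta> k)))\<^sup>2 \<le> Q U \<epsilon>"
          unfolding Q_def by (rule proj_bound[OF BU(1) inc])
        also have "\<dots> \<le> (t + real n * lam0 * real (card S)) / 4" using bnd[OF TT] unfolding U_def by simp
        finally show "(inner_n n \<epsilon> (matvec p X (\<lambda>k. bh k - \<beta> k)) / norm_n n (matvec p X (\<lambda>k. bh k - \<beta> k)))\<^sup>2
            \<le> (t + real n * lam0 * real (card S)) / 4" .
      qed
      then have "4 / real n * Sup \<le> 4 / real n * ((t + real n * lam0 * real (card S)) / 4)"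
        by (rule mult_left_mono) (use n in auto)
      also have "\<dots> = t / real n + lam0 * real (card S)" using n by (simp add: field_simps)
      finally show False using gt by simp
    qed
  qed
  define r where "r = sqrt 2 * exp (- (real n * lam0) / (16 * \<sigma>\<^sup>2))"
  define K where "K = exp (- t / (16 * \<sigma>\<^sup>2))"
  have FT: "measure E (F S T) \<le> K * sqrt 2 ^ s * r ^ card S" if "S \<in> Pow {..<p}" "T \<in> Ts" for S T
  proof -
    have finU: "finite (S \<union> T)" using that unfolding Ts_def by (auto intro: finite_subset)
    have o: "orthonormal n (B (S\<union>T))" and lenB: "length (B (S\<union>T)) \<le> card (S\<union>T)" using B finU by auto
    have m1: "measure E (F S T) \<le> sqrt 2 ^ length (B (S\<union>T)) * exp (- (t + real n * lam0 * real (card S)) / (16 * \<sigma>\<^sup>2))"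
      unfolding F_def Q_def E_def by (rule tail_bound[OF sp o])
    have m2: "sqrt 2 ^ length (B (S\<union>T)) \<le> sqrt 2 ^ (card S + s)"
    proof (rule power_increasing)
      show "length (B (S\<union>T)) \<le> card S + s" using lenB card_Un_le[of S T] that unfolding Ts_def by auto
    qed auto
    have ex: "- (t + real n * lam0 * real (card S)) / (16 * \<sigma>\<^sup>2) = - t / (16 * \<sigma>\<^sup>2) + real (card S) * (- (real n * lam0) / (16 * \<sigma>\<^sup>2))"
      using sp by (simp add: field_simps)
    have e1: "exp (- (t + real n * lam0 * real (card S)) / (16 * \<sigma>\<^sup>2)) = K * exp (- (real n * lam0) / (16 * \<sigma>\<^sup>2)) ^ card S"
      unfolding ex K_def exp_add exp_of_nat_mult ..
    have "measure E (F S T) \<le> sqrt 2 ^ (card S + s) * exp (- (t + real n * lam0 * real (card S)) / (16 * \<sigma>\<^sup>2))"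
      by (rule order_trans[OF m1 mult_right_mono[OF m2 exp_ge_zero]])
    also have "\<dots> = K * sqrt 2 ^ s * r ^ card S"
      unfolding e1 r_def by (simp add: power_add power_mult_distrib mult_ac)
    finally show ?thesis .
  qed
  have cardTs: "card Ts = p choose s"
    unfolding Ts_def using n_subsets[of "{..<p}" s] by simp
  have "measure E A \<le> (\<Sum>S\<in>Pow {..<p}. measure E (\<Union>T\<in>Ts. F S T))"
    unfolding A_def by (rule measure_UNION_le) (auto intro: FU)
  also have "\<dots> \<le> (\<Sum>S\<in>Pow {..<p}. \<Sum>T\<in>Ts. measure E (F S T))"
    by (intro sum_mono measure_UNION_le finTs FS)
  also have "\<dots> \<le> (\<Sum>S\<in>Pow {..<p}. \<Sum>T\<in>Ts. K * sqrt 2 ^ s * r ^ card S)"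
    by (intro sum_mono FT)
  also have "\<dots> = real (p choose s) * (K * sqrt 2 ^ s) * (\<Sum>S\<in>Pow {..<p}. r ^ card S)"
    by (simp add: cardTs sum_distrib_left mult_ac)
  also have "(\<Sum>S\<in>Pow {..<p}. r ^ card S) = (1 + r) ^ p"
    using count_sum[of "{..<p}" r] by simp
  finally have m: "measure E A \<le> real (p choose s) * (K * sqrt 2 ^ s) * (1 + r) ^ p" .
  have r0: "0 \<le> r" unfolding r_def by simp
  have e2: "exp 1 \<ge> (2::real)" using exp_ge_add_one_self[of 1] by simp
  have rp1: "real p \<ge> 1" using p1 by simp
  have ep: "exp 1 * real p \<ge> 1" using mult_mono[of 1 "exp 1" 1 "real p"] e2 rp1 by simp
  have rp: "r * real p \<le> 1"
  proof -
    have "real n * lam0 \<ge> 32 * \<sigma>\<^sup>2 * ln (exp 1 * real p)"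
      using lam0 n by (simp add: pos_divide_le_eq mult.commute)
    then have "(real n * lam0) / (16 * \<sigma>\<^sup>2) \<ge> 2 * ln (exp 1 * real p)"
      using sp by (simp add: pos_le_divide_eq mult_ac)
    then have "exp (- (real n * lam0) / (16 * \<sigma>\<^sup>2)) \<le> exp (- (2 * ln (exp 1 * real p)))"
      by simp
    also have "\<dots> = 1 / (exp 1 * real p)\<^sup>2"
    proof -
      have "exp (2 * ln (exp 1 * real p)) = (exp 1 * real p)\<^sup>2"
        using exp_of_nat_mult[of 2 "ln (exp 1 * real p)"] ep by simp
      then show ?thesis by (simp add: exp_minus inverse_eq_divide)
    qed
    finally have le1: "exp (- (real n * lam0) / (16 * \<sigma>\<^sup>2)) \<le> 1 / (exp 1 * real p)\<^sup>2" .
    have "r * real p \<le> sqrt 2 * (1 / (exp 1 * real p)\<^sup>2) * real p"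
      unfolding r_def using le1 by (intro mult_right_mono mult_left_mono) auto
    also have "\<dots> = sqrt 2 / ((exp 1)\<^sup>2 * real p)"
      using p1 by (simp add: power2_eq_square field_simps)
    also have "\<dots> \<le> 1"
    proof -
      have "(exp 1)\<^sup>2 \<ge> (4::real)" using e2 power_mono[of "2::real" "exp 1" 2] by simp
      then have "(exp 1)\<^sup>2 * real p \<ge> 4" using mult_mono[of 4 "(exp 1)\<^sup>2" 1 "real p"] rp1 by simp
      moreover have "sqrt 2 \<le> (4::real)" using sqrt2_less_2 by simp
      ultimately show ?thesis by simp
    qed
    finally show ?thesis .
  qed
  have pw: "(1 + r) ^ p \<le> 3" by (rule pow_bound[OF p1 r0 rp])
  have ch: "real (p choose s) \<le> real p ^ s"
  proof -
    have "p choose s \<le> p ^ s" by (rule binomial_le_pow[OF sle])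
    then have "real (p choose s) \<le> real (p ^ s)" by (simp only: of_nat_le_iff)
    then show ?thesis by simp
  qed
  have base: "sqrt 2 * real p \<le> (3 * exp 1 * real p)\<^sup>2"
  proof -
    have "sqrt 2 * real p \<le> 2 * real p" using sqrt2_less_2 by (intro mult_right_mono) auto
    also have "\<dots> \<le> (3 * exp 1 * real p)\<^sup>2"
    proof -
      have "3 * exp 1 * real p \<ge> 6 * real p" using mult_right_mono[OF e2, of "real p"] by (simp add: mult_ac)
      moreover have "6 * real p \<ge> 1" using p1 by simp
      ultimately have "(3 * exp 1 * real p)\<^sup>2 \<ge> (6 * real p)\<^sup>2"
        by (intro power_mono) auto
      moreover have "(6 * real p)\<^sup>2 \<ge> 2 * real p" using p1 by (simp add: power2_eq_square)
      ultimately show ?thesis by simp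
    qed
    finally show ?thesis .
  qed
  have K0: "K \<ge> 0" unfolding K_def by simp
  have "real (p choose s) * (K * sqrt 2 ^ s) * (1 + r) ^ p \<le> real p ^ s * (K * sqrt 2 ^ s) * 3"
    using ch pw K0 r0 by (intro mult_mono) auto
  also have "\<dots> = 3 * K * (sqrt 2 * real p) ^ s" by (simp add: power_mult_distrib mult_ac)
  also have "\<dots> \<le> 3 * K * ((3 * exp 1 * real p)\<^sup>2) ^ s"
    using base K0 by (intro mult_left_mono power_mono) auto
  also have "\<dots> \<le> 4 * K * ((3 * exp 1 * real p)\<^sup>2) ^ s"
    using K0 by (intro mult_right_mono) auto
  also have "\<dots> = 4 * exp (- t / (16 * \<sigma>\<^sup>2) + 2 * real s * ln (3 * exp 1 * real p))"
  proof -
    have pos: "3 * exp 1 * real p > 0" using p1 by simp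
    have "exp (2 * real s * ln (3 * exp 1 * real p)) = exp (ln (3 * exp 1 * real p)) ^ (2 * s)"
      using exp_of_nat_mult[of "2 * s" "ln (3 * exp 1 * real p)"] by (simp add: mult_ac)
    also have "\<dots> = ((3 * exp 1 * real p)\<^sup>2) ^ s" using pos by (simp add: power_mult)
    finally show ?thesis unfolding K_def exp_add by simp
  qed
  finally have "measure E A \<le> 4 * exp (- t / (16 * \<sigma>\<^sup>2) + 2 * real s * ln (3 * exp 1 * real p))"
    using m by linarith
  then show ?thesis using Asets incl unfolding E_def by blast
qed

lemma num_cols_ge1:
  assumes "n > 0" "q \<ge> 1" "\<forall>i<n. \<forall>j<q. C i j \<in> {1..pj j}"
  shows "num_cols q pj N \<ge> 1"
proof -
  have "C 0 0 \<in> {1..pj 0}" using assms by auto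
  then have "pj 0 \<ge> 1" by auto
  moreover have "pj 0 \<le> (\<Sum>j<q. pj j)" using assms(2) by (intro member_le_sum) auto
  ultimately show ?thesis unfolding num_cols_def by simp
qed

theorem lemmaB1:
  shows "\<exists>a::real. a > 0 \<and> (\<exists>c0::real. c0 > 0 \<and>
    (\<forall>(n::nat) (q::nat) (pj::nat \<Rightarrow> nat) (N::nat) (C::nat \<Rightarrow> nat \<Rightarrow> nat)
       (W::nat \<Rightarrow> nat \<Rightarrow> real) (\<sigma>::real) (fstar::nat \<Rightarrow> real) (lam::real) (lam0::real)
       (est::(nat \<Rightarrow> real) \<Rightarrow> real \<times> (nat \<Rightarrow> real)) (t::real) (s::nat).
       n > 0 \<and> q \<ge> 1 \<and> (\<forall>i<n. \<forall>j<q. C i j \<in> {1..pj j}) \<and> \<sigma> > 0 \<and>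
       lam \<ge> 0 \<and> lam0 \<ge> c0 * \<sigma>\<^sup>2 * ln (exp 1 * real (num_cols q pj N)) / real n \<and>
       (\<forall>\<epsilon>\<in>space (gauss_noise n \<sigma>).
          is_global_minimiser n (num_cols q pj N) q pj (design q pj C W)
            (\<lambda>i. fstar i + \<epsilon> i) lam0 lam (est \<epsilon>)) \<and>
       t > 0 \<and> s \<le> num_cols q pj N
       \<longrightarrow> (\<exists>A\<in>sets (gauss_noise n \<sigma>).
              event_E1 n (num_cols q pj N) (design q pj C W) \<sigma> lam0 est t s \<subseteq> A \<and>
              measure (gauss_noise n \<sigma>) A
                \<le> 4 * exp (- t / (a * \<sigma>\<^sup>2) + 2 * real s * ln (3 * exp 1 * real (num_cols q pj N))))))"
  apply (rule exI[of _ 16])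
  apply (intro conjI)
   apply simp
  apply (rule exI[of _ 32])
  apply (intro conjI)
   apply simp
  apply (intro allI impI)
  apply (elim conjE)
  apply (rule main_general)
      apply assumption
     apply (erule (2) num_cols_ge1)
    apply assumption
   apply assumption
  apply assumption
  done

end
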